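(* Let $R$ be a poset and $P$ a join-semilattice with a least element. The following are equivalent: (i) there is an order-embedding of $I(R)$ into $J(P)$ which preserves arbitrary joins; (ii) there is an order-embedding of $I(R)$ into $J(P)$; (iii) there is a map $g:I_{<\omega}(R)\to P$ such that for all $X,Y_1,\dots,Y_n\in I_{<\omega}(R)$: if $X\not\subseteq Y_1\cup\dots\cup Y_n$ then $g(X)\not\le g(Y_1)\vee\dots\vee g(Y_n)$; (iv) there is a map $h:R\to P$ such that for all $x,y_1,\dots,y_n\in R$: if $x\not\le y_i$ for every $1\le i\le n$, then $h(x)\not\le h(y_1)\vee\dots\vee h(y_n)$.
   Context: $I(R)$ is the set of initial segments of $R$ ordered by inclusion; $I_{<\omega}(R)$ is the set of finitely generated initial segments of $R$, i.e. those of the form $\downarrow A=\{x\in R:\exists a\in A,\ x\le a\}$ with $A$ finite. An ideal of $P$ is a non-empty up-directed initial segment; $J(P)$ is the set of ideals of $P$ ordered by inclusion. An order-embedding $f$ satisfies $x\le y\iff f(x)\le f(y)$. *)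

theory Defs
  imports Main
begin

text \<open>The poset R is a carrier set R with the order inherited from the type.\<close>

definition init_segs :: "'a::order set \<Rightarrow> 'a set set" where
  "init_segs R = {S. S \<subseteq> R \<and> (\<forall>x\<in>S. \<forall>y\<in>R. y \<le> x \<longrightarrow> y \<in> S)}"

definition down_set :: "'a::order set \<Rightarrow> 'a set \<Rightarrow> 'a set" where
  "down_set R A = {x\<in>R. \<exists>a\<in>A. x \<le> a}"

definition fin_init_segs :: "'a::order set \<Rightarrow> 'a set set" where
  "fin_init_segs R = {down_set R A | A. finite A \<and> A \<subseteq> R}"

definition order_ideals :: "'p::order set set" where
  "order_ideals = {I. I \<noteq> {} \<and> (\<forall>x\<in>I. \<forall>y. y \<le> x \<longrightarrow> y \<in> I)
                      \<and> (\<forall>x\<in>I. \<forall>y\<in>I. \<exists>z\<in>I. x \<le> z \<and> y \<le> z)}"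

definition ideal_join :: "'p::order set set \<Rightarrow> 'p set" where
  "ideal_join F = \<Inter>{I \<in> order_ideals. \<forall>S\<in>F. S \<subseteq> I}"

definition order_embedding_on :: "'a set set \<Rightarrow> 'b set set \<Rightarrow> ('a set \<Rightarrow> 'b set) \<Rightarrow> bool" where
  "order_embedding_on A B f \<longleftrightarrow> (\<forall>X\<in>A. f X \<in> B) \<and> (\<forall>X\<in>A. \<forall>Y\<in>A. X \<subseteq> Y \<longleftrightarrow> f X \<subseteq> f Y)"

definition joinl :: "'p::bounded_semilattice_sup_bot list \<Rightarrow> 'p" where
  "joinl xs = foldr sup xs bot"

end

theory Submission
  imports Defs
begin

lemma joinl_le_iff: "joinl xs \<le> (z::'p::bounded_semilattice_sup_bot) \<longleftrightarrow> (\<forall>x\<in>set xs. x \<le> z)"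
  by (induction xs) (auto simp: joinl_def)

lemma member_le_joinl: "x \<in> set xs \<Longrightarrow> x \<le> joinl (xs::'p::bounded_semilattice_sup_bot list)"
  using joinl_le_iff[of xs "joinl xs"] by auto

lemma ideal_bot: "I \<in> order_ideals \<Longrightarrow> (bot::'p::bounded_semilattice_sup_bot) \<in> I"
  unfolding order_ideals_def by auto

lemma ideal_down: "I \<in> order_ideals \<Longrightarrow> x \<in> I \<Longrightarrow> y \<le> x \<Longrightarrow> y \<in> I"
  unfolding order_ideals_def by auto

lemma ideal_sup: "I \<in> order_ideals \<Longrightarrow> x \<in> I \<Longrightarrow> y \<in> I \<Longrightarrow> sup x (y::'p::bounded_semilattice_sup_bot) \<in> I"
proof -
  assume I: "I \<in> order_ideals" and x: "x \<in> I" and y: "y \<in> I"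
  have "\<forall>x\<in>I. \<forall>y\<in>I. \<exists>z\<in>I. x \<le> z \<and> y \<le> z" using I by (simp add: order_ideals_def)
  then obtain z where "z \<in> I" "x \<le> z" "y \<le> z" using x y by meson
  moreover have "sup x y \<le> z" using calculation by simp
  ultimately show ?thesis using I ideal_down by blast
qed

lemma ideal_joinl: "I \<in> order_ideals \<Longrightarrow> set xs \<subseteq> I \<Longrightarrow> joinl (xs::'p::bounded_semilattice_sup_bot list) \<in> I"
  by (induction xs) (auto simp: joinl_def ideal_bot ideal_sup)

lemma ii_iv:
  fixes R :: "'a::order set"
  assumes f: "order_embedding_on (init_segs R) (order_ideals::'p::bounded_semilattice_sup_bot set set) f"
  shows "\<exists>h::'a \<Rightarrow> 'p. \<forall>x\<in>R. \<forall>ys. set ys \<subseteq> R \<longrightarrow>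
                 (\<forall>y\<in>set ys. \<not> x \<le> y) \<longrightarrow> \<not> h x \<le> joinl (map h ys)"
proof -
  define D where "D x = {y\<in>R. y \<le> x}" for x
  define N where "N x = {y\<in>R. \<not> x \<le> y}" for x
  have Di: "D x \<in> init_segs R" for x unfolding D_def init_segs_def by auto
  have Ni: "N x \<in> init_segs R" for x unfolding N_def init_segs_def using order_trans by blast
  have fi: "f X \<in> order_ideals" if "X \<in> init_segs R" for X
    using f that unfolding order_embedding_on_def by auto
  have emb: "X \<subseteq> Y \<longleftrightarrow> f X \<subseteq> f Y" if "X \<in> init_segs R" "Y \<in> init_segs R" for X Y
    using f that unfolding order_embedding_on_def by auto
  define h where "h x = (SOME p. p \<in> f (D x) \<and> p \<notin> f (N x))" for x
  have hx: "h x \<in> f (D x) \<and> h x \<notin> f (N x)" if "x \<in> R" for x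
  proof -
    have "\<not> D x \<subseteq> N x" using that unfolding D_def N_def by auto
    hence "\<not> f (D x) \<subseteq> f (N x)" using emb Di Ni by blast
    then obtain p where "p \<in> f (D x) \<and> p \<notin> f (N x)" by blast
    thus ?thesis unfolding h_def by (rule someI)
  qed
  show ?thesis
  proof (intro exI[of _ h] ballI allI impI notI)
    fix x ys assume x: "x \<in> R" and ys: "set ys \<subseteq> R" and nle: "\<forall>y\<in>set ys. \<not> x \<le> y"
      and le: "h x \<le> joinl (map h ys)"
    have "set (map h ys) \<subseteq> f (N x)"
    proof
      fix p assume "p \<in> set (map h ys)"
      then obtain y where y: "y \<in> set ys" "p = h y" by auto
      have "D y \<subseteq> N x" using nle y(1) unfolding D_def N_def using order_trans by blast
      hence "f (D y) \<subseteq> f (N x)" using emb Di Ni by blast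
      thus "p \<in> f (N x)" using hx[of y] y ys by auto
    qed
    hence "joinl (map h ys) \<in> f (N x)" using ideal_joinl fi Ni by blast
    hence "h x \<in> f (N x)" using ideal_down fi Ni le by blast
    thus False using hx x by blast
  qed
qed

lemma iv_i:
  fixes R :: "'a::order set"
  assumes h: "\<forall>x\<in>R. \<forall>ys. set ys \<subseteq> R \<longrightarrow>
                 (\<forall>y\<in>set ys. \<not> x \<le> y) \<longrightarrow> \<not> (h::'a\<Rightarrow>'p::bounded_semilattice_sup_bot) x \<le> joinl (map h ys)"
  shows "\<exists>f. order_embedding_on (init_segs R) (order_ideals::'p::bounded_semilattice_sup_bot set set) f
                \<and> (\<forall>\<S>\<subseteq>init_segs R. f (\<Union>\<S>) = ideal_join (f ` \<S>))"
proof -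
  define f where "f S = {p. \<exists>ys. set ys \<subseteq> S \<and> p \<le> joinl (map h ys)}" for S
  have fid: "f S \<in> order_ideals" for S
    unfolding order_ideals_def
  proof (intro CollectI conjI ballI allI impI)
    have "bot \<in> f S" unfolding f_def by (rule CollectI, rule exI[of _ "[]"]) (simp add: joinl_def)
    thus "f S \<noteq> {}" by blast
  next
    fix x y assume "x \<in> f S" "y \<le> x" thus "y \<in> f S" unfolding f_def using order_trans by blast
  next
    fix x y assume "x \<in> f S" "y \<in> f S"
    then obtain ys zs where a: "set ys \<subseteq> S" "x \<le> joinl (map h ys)" "set zs \<subseteq> S" "y \<le> joinl (map h zs)"
      unfolding f_def by blast
    have "joinl (map h ys) \<le> joinl (map h (ys@zs))" "joinl (map h zs) \<le> joinl (map h (ys@zs))"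
      by (auto simp: joinl_le_iff intro: member_le_joinl)
    moreover have "joinl (map h (ys@zs)) \<in> f S" unfolding f_def
      by (rule CollectI, rule exI[of _ "ys@zs"]) (use a in auto)
    ultimately show "\<exists>z\<in>f S. x \<le> z \<and> y \<le> z" using a order_trans by blast
  qed
  have mono: "S \<subseteq> T \<Longrightarrow> f S \<subseteq> f T" for S T unfolding f_def by blast
  have hin: "x \<in> S \<Longrightarrow> h x \<in> f S" for x S
    unfolding f_def by (rule CollectI, rule exI[of _ "[x]"]) (auto simp: joinl_def)
  have emb: "order_embedding_on (init_segs R) order_ideals f"
    unfolding order_embedding_on_def
  proof (intro conjI ballI fid iffI)
    fix S T assume "S \<in> init_segs R" "T \<in> init_segs R" "S \<subseteq> T" thus "f S \<subseteq> f T" using mono by blast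
  next
    fix S T assume S: "S \<in> init_segs R" and T: "T \<in> init_segs R" and fST: "f S \<subseteq> f T"
    show "S \<subseteq> T"
    proof
      fix x assume xS: "x \<in> S"
      show "x \<in> T"
      proof (rule ccontr)
        assume xT: "x \<notin> T"
        have "h x \<in> f T" using hin[OF xS] fST by blast
        then obtain ys where ys: "set ys \<subseteq> T" "h x \<le> joinl (map h ys)" unfolding f_def by blast
        have xR: "x \<in> R" using S xS unfolding init_segs_def by auto
        have TR: "T \<subseteq> R" using T unfolding init_segs_def by auto
        have Td: "\<forall>x\<in>T. \<forall>y\<in>R. y \<le> x \<longrightarrow> y \<in> T" using T unfolding init_segs_def by simp
        have "\<forall>y\<in>set ys. \<not> x \<le> y"
        proof (intro ballI notI)
          fix y assume "y \<in> set ys" "x \<le> y"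
          hence "x \<in> T" using Td ys(1) xR by blast
          thus False using xT by simp
        qed
        moreover have "set ys \<subseteq> R" using ys(1) TR by simp
        ultimately show False using h xR ys(2) by blast
      qed
    qed
  qed
  have join: "f (\<Union>\<S>) = ideal_join (f ` \<S>)" for \<S>
  proof
    show "ideal_join (f ` \<S>) \<subseteq> f (\<Union>\<S>)"
      unfolding ideal_join_def
    proof (rule Inter_lower)
      show "f (\<Union>\<S>) \<in> {I \<in> order_ideals. \<forall>S\<in>f ` \<S>. S \<subseteq> I}"
        using fid mono[of _ "\<Union>\<S>"] by auto
    qed
  next
    show "f (\<Union>\<S>) \<subseteq> ideal_join (f ` \<S>)"
      unfolding ideal_join_def
    proof (intro subsetI InterI)
      fix p I assume p: "p \<in> f (\<Union>\<S>)" and I: "I \<in> {I \<in> order_ideals. \<forall>S\<in>f ` \<S>. S \<subseteq> I}"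
      obtain ys where ys: "set ys \<subseteq> \<Union>\<S>" "p \<le> joinl (map h ys)" using p unfolding f_def by blast
      have "set (map h ys) \<subseteq> I"
      proof
        fix q assume "q \<in> set (map h ys)"
        then obtain y where y: "y \<in> set ys" "q = h y" by auto
        then obtain S where S: "S \<in> \<S>" "y \<in> S" using ys(1) by blast
        have "f S \<subseteq> I" using I S(1) by blast
        thus "q \<in> I" using hin[OF S(2)] y(2) by blast
      qed
      hence "joinl (map h ys) \<in> I" using I ideal_joinl by blast
      thus "p \<in> I" using I ys(2) ideal_down by blast
    qed
  qed
  show ?thesis using emb join by blast
qed

lemma iii_iv:
  fixes R :: "'a::order set"
  assumes g: "\<forall>X\<in>fin_init_segs R. \<forall>Ys. set Ys \<subseteq> fin_init_segs R \<longrightarrow>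
                 \<not> X \<subseteq> \<Union>(set Ys) \<longrightarrow> \<not> (g::'a set \<Rightarrow> 'p::bounded_semilattice_sup_bot) X \<le> joinl (map g Ys)"
  shows "\<exists>h::'a \<Rightarrow> 'p. \<forall>x\<in>R. \<forall>ys. set ys \<subseteq> R \<longrightarrow>
                 (\<forall>y\<in>set ys. \<not> x \<le> y) \<longrightarrow> \<not> h x \<le> joinl (map h ys)"
proof -
  define D where "D x = down_set R {x}" for x
  have Df: "x \<in> R \<Longrightarrow> D x \<in> fin_init_segs R" for x
    unfolding D_def fin_init_segs_def by blast
  show ?thesis
  proof (intro exI[of _ "\<lambda>x. g (D x)"] ballI allI impI)
    fix x ys assume x: "x \<in> R" and ys: "set ys \<subseteq> R" and nle: "\<forall>y\<in>set ys. \<not> x \<le> y"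
    have "set (map D ys) \<subseteq> fin_init_segs R" using ys Df by auto
    moreover have "\<not> D x \<subseteq> \<Union>(set (map D ys))" using x nle unfolding D_def down_set_def by auto
    ultimately have "\<not> g (D x) \<le> joinl (map g (map D ys))" using g Df[OF x] by blast
    thus "\<not> g (D x) \<le> joinl (map (\<lambda>x. g (D x)) ys)" by (simp add: comp_def)
  qed
qed

lemma iv_iii:
  fixes R :: "'a::order set"
  assumes h: "\<forall>x\<in>R. \<forall>ys. set ys \<subseteq> R \<longrightarrow>
                 (\<forall>y\<in>set ys. \<not> x \<le> y) \<longrightarrow> \<not> (h::'a\<Rightarrow>'p::bounded_semilattice_sup_bot) x \<le> joinl (map h ys)"
  shows "\<exists>g::'a set \<Rightarrow> 'p. \<forall>X\<in>fin_init_segs R. \<forall>Ys. set Ys \<subseteq> fin_init_segs R \<longrightarrow>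
                 \<not> X \<subseteq> \<Union>(set Ys) \<longrightarrow> \<not> g X \<le> joinl (map g Ys)"
proof -
  define L where "L X = (SOME xs. set xs \<subseteq> R \<and> down_set R (set xs) = X)" for X
  have L: "set (L X) \<subseteq> R \<and> down_set R (set (L X)) = X" if "X \<in> fin_init_segs R" for X
  proof -
    have "\<exists>A. X = down_set R A \<and> finite A \<and> A \<subseteq> R" using that by (simp add: fin_init_segs_def)
    then obtain A where A: "finite A" "A \<subseteq> R" "X = down_set R A" by blast
    obtain xs where "set xs = A" using A(1) finite_list by blast
    hence "set xs \<subseteq> R \<and> down_set R (set xs) = X" using A by auto
    thus ?thesis unfolding L_def by (rule someI)
  qed
  define g where "g X = joinl (map h (L X))" for X
  show ?thesis
  proof (intro exI[of _ g] ballI allI impI notI)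
    fix X Ys assume X: "X \<in> fin_init_segs R" and Ys: "set Ys \<subseteq> fin_init_segs R"
      and nsub: "\<not> X \<subseteq> \<Union>(set Ys)" and le: "g X \<le> joinl (map g Ys)"
    obtain x where x: "x \<in> X" "x \<notin> \<Union>(set Ys)" using nsub by blast
    have "x \<in> down_set R (set (L X))" using L[OF X] x(1) by simp
    then obtain a where a: "a \<in> set (L X)" "x \<le> a" "x \<in> R" unfolding down_set_def by blast
    have aR: "a \<in> R" using L[OF X] a(1) by blast
    define zs where "zs = concat (map L Ys)"
    have zsR: "set zs \<subseteq> R"
    proof
      fix z assume "z \<in> set zs"
      then obtain Y where "Y \<in> set Ys" "z \<in> set (L Y)" unfolding zs_def by auto
      thus "z \<in> R" using L[of Y] Ys by blast
    qed
    have nle: "\<forall>z\<in>set zs. \<not> a \<le> z"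
    proof (intro ballI notI)
      fix z assume z: "z \<in> set zs" and az: "a \<le> z"
      then obtain Y where Y: "Y \<in> set Ys" "z \<in> set (L Y)" unfolding zs_def by auto
      have "x \<le> z" using a(2) az by (rule order_trans)
      hence "x \<in> down_set R (set (L Y))" unfolding down_set_def using a(3) Y(2) by blast
      moreover have "Y \<in> fin_init_segs R" using Y(1) Ys by blast
      ultimately have "x \<in> Y" using L by simp
      thus False using x(2) Y by blast
    qed
    have "h a \<le> g X" unfolding g_def using a(1) by (auto intro: member_le_joinl)
    moreover have "joinl (map g Ys) \<le> joinl (map h zs)"
      unfolding joinl_le_iff g_def
    proof
      fix p assume "p \<in> set (map (\<lambda>X. joinl (map h (L X))) Ys)"
      then obtain Y where Y: "Y \<in> set Ys" "p = joinl (map h (L Y))" by auto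
      show "p \<le> joinl (map h zs)" unfolding Y(2) joinl_le_iff
      proof
        fix q assume "q \<in> set (map h (L Y))"
        then obtain y where "y \<in> set (L Y)" "q = h y" by auto
        hence "q \<in> set (map h zs)" using Y(1) unfolding zs_def by auto
        thus "q \<le> joinl (map h zs)" by (rule member_le_joinl)
      qed
    qed
    ultimately have "h a \<le> joinl (map h zs)" using le order_trans by metis
    thus False using h aR zsR nle by blast
  qed
qed

theorem lemma1p2:
  fixes R :: "'a::order set"
  shows
   "let
      ci = (\<exists>f. order_embedding_on (init_segs R) (order_ideals::'p::bounded_semilattice_sup_bot set set) f
                \<and> (\<forall>\<S>\<subseteq>init_segs R. f (\<Union>\<S>) = ideal_join (f ` \<S>)));
      cii = (\<exists>f. order_embedding_on (init_segs R) (order_ideals::'p set set) f);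
      ciii = (\<exists>g::'a set \<Rightarrow> 'p. \<forall>X\<in>fin_init_segs R. \<forall>Ys. set Ys \<subseteq> fin_init_segs R \<longrightarrow>
                 \<not> X \<subseteq> \<Union>(set Ys) \<longrightarrow> \<not> g X \<le> joinl (map g Ys));
      civ = (\<exists>h::'a \<Rightarrow> 'p. \<forall>x\<in>R. \<forall>ys. set ys \<subseteq> R \<longrightarrow>
                 (\<forall>y\<in>set ys. \<not> x \<le> y) \<longrightarrow> \<not> h x \<le> joinl (map h ys))
    in (ci \<longleftrightarrow> cii) \<and> (cii \<longleftrightarrow> ciii) \<and> (ciii \<longleftrightarrow> civ)"
  unfolding Let_def
proof -
  let ?ci = "\<exists>f. order_embedding_on (init_segs R) (order_ideals::'p::bounded_semilattice_sup_bot set set) f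
                \<and> (\<forall>\<S>\<subseteq>init_segs R. f (\<Union>\<S>) = ideal_join (f ` \<S>))"
  let ?cii = "\<exists>f. order_embedding_on (init_segs R) (order_ideals::'p set set) f"
  let ?ciii = "\<exists>g::'a set \<Rightarrow> 'p. \<forall>X\<in>fin_init_segs R. \<forall>Ys. set Ys \<subseteq> fin_init_segs R \<longrightarrow>
                 \<not> X \<subseteq> \<Union>(set Ys) \<longrightarrow> \<not> g X \<le> joinl (map g Ys)"
  let ?civ = "\<exists>h::'a \<Rightarrow> 'p. \<forall>x\<in>R. \<forall>ys. set ys \<subseteq> R \<longrightarrow>
                 (\<forall>y\<in>set ys. \<not> x \<le> y) \<longrightarrow> \<not> h x \<le> joinl (map h ys)"
  have 1: "?ci \<Longrightarrow> ?cii" by blast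
  have 2: "?cii \<Longrightarrow> ?civ" by (erule exE, rule ii_iv)
  have 3: "?civ \<Longrightarrow> ?ci" by (erule exE, erule iv_i)
  have 4: "?civ \<Longrightarrow> ?ciii" by (erule exE, erule iv_iii)
  have 5: "?ciii \<Longrightarrow> ?civ" by (erule exE, erule iii_iv)
  show "(?ci \<longleftrightarrow> ?cii) \<and> (?cii \<longleftrightarrow> ?ciii) \<and> (?ciii \<longleftrightarrow> ?civ)"
    using 1 2 3 4 5 by argo
qed

end
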